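(* Let $\mathbf{a}$ be a non-periodic CSCA and $j\in\{1,2,3\}$. Let $\xi\in\mathcal{P}^2$ be non-zero. Then there is at most one time $t\ge0$ such that $\mathbf{a}^t\xi$ is of "type $j$", where type $1$ means $\mathbf{a}^t\xi=(p,0)$, type $3$ means $\mathbf{a}^t\xi=(0,p)$, and type $2$ means $\mathbf{a}^t\xi=(p,p)$ for some non-zero $p\in\mathcal{P}$. Equivalently: in the history $T^t(W(\xi))$, $t\ge 0$, of a non-periodic CQCA $T$, a finite tensor product consisting only of $\sigma_j$'s and identities occurs at most once.
   Context: $\mathcal{P}$ = Laurent polynomials in $u$ over $\mathbb{Z}_2$, $\mathcal{R}$ its palindromes. A CSCA is a $2\times2$ matrix over $\mathcal{R}$ of determinant $1$; it is periodic if some positive power is the identity. A vector $\xi=(\xi_+,\xi_-)\in\mathcal{P}^2$ labels the Pauli product $W(\xi)=\bigotimes_xW(\xi_+(x),\xi_-(x))$ with $W(1,0)=\sigma_1$, $W(0,1)=\sigma_3$, $W(1,1)\propto\sigma_2$, $W(0,0)=\mathbb{1}$; a CQCA $T$ acts as $T(W(\xi))\propto W(\mathbf{a}\xi)$. *)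

theory Defs
  imports Main "HOL-Library.Z2"
begin

text \<open>Laurent polynomials in u over Z_2: coefficient functions int => bit with finite support.
  The function p represents sum_n (p n) u^n.\<close>

type_synonym lpoly = "int \<Rightarrow> bit"

definition is_lpoly :: "lpoly \<Rightarrow> bool" where
  "is_lpoly p \<longleftrightarrow> finite {n. p n \<noteq> 0}"

definition lp_zero :: lpoly where "lp_zero = (\<lambda>n. 0)"
definition lp_one :: lpoly where "lp_one = (\<lambda>n. if n = 0 then 1 else 0)"
definition lp_add :: "lpoly \<Rightarrow> lpoly \<Rightarrow> lpoly" where
  "lp_add p q = (\<lambda>n. p n + q n)"
definition lp_mult :: "lpoly \<Rightarrow> lpoly \<Rightarrow> lpoly" where
  "lp_mult p q = (\<lambda>n. \<Sum>k\<in>{k. p k \<noteq> 0}. p k * q (n - k))"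

text \<open>Palindromes: p(u) = p(u^{-1}).\<close>
definition is_palindrome :: "lpoly \<Rightarrow> bool" where
  "is_palindrome p \<longleftrightarrow> is_lpoly p \<and> (\<forall>n. p (- n) = p n)"

text \<open>2x2 matrices (a11, a12, a21, a22) and vectors (xi_+, xi_-).\<close>
type_synonym lmat = "lpoly \<times> lpoly \<times> lpoly \<times> lpoly"
type_synonym lvec = "lpoly \<times> lpoly"

definition mat_id :: lmat where "mat_id = (lp_one, lp_zero, lp_zero, lp_one)"

fun mat_mult :: "lmat \<Rightarrow> lmat \<Rightarrow> lmat" where
  "mat_mult (a11, a12, a21, a22) (b11, b12, b21, b22) =
     (lp_add (lp_mult a11 b11) (lp_mult a12 b21), lp_add (lp_mult a11 b12) (lp_mult a12 b22),
      lp_add (lp_mult a21 b11) (lp_mult a22 b21), lp_add (lp_mult a21 b12) (lp_mult a22 b22))"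

fun mat_pow :: "lmat \<Rightarrow> nat \<Rightarrow> lmat" where
  "mat_pow a 0 = mat_id"
| "mat_pow a (Suc n) = mat_mult a (mat_pow a n)"

fun mat_apply :: "lmat \<Rightarrow> lvec \<Rightarrow> lvec" where
  "mat_apply (a11, a12, a21, a22) (x, y) =
     (lp_add (lp_mult a11 x) (lp_mult a12 y), lp_add (lp_mult a21 x) (lp_mult a22 y))"

fun mat_det :: "lmat \<Rightarrow> lpoly" where
  "mat_det (a11, a12, a21, a22) = lp_add (lp_mult a11 a22) (lp_mult a12 a21)"
  \<comment> \<open>over Z_2, minus equals plus\<close>

definition is_csca :: "lmat \<Rightarrow> bool" where
  "is_csca a \<longleftrightarrow> (case a of (a11, a12, a21, a22) \<Rightarrow>
      is_palindrome a11 \<and> is_palindrome a12 \<and> is_palindrome a21 \<and> is_palindrome a22)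
    \<and> mat_det a = lp_one"

definition is_periodic :: "lmat \<Rightarrow> bool" where
  "is_periodic a \<longleftrightarrow> (\<exists>n>0. mat_pow a n = mat_id)"

definition is_type :: "nat \<Rightarrow> lvec \<Rightarrow> bool" where
  "is_type j v \<longleftrightarrow> (\<exists>p. is_lpoly p \<and> p \<noteq> lp_zero \<and>
      ((j = 1 \<and> v = (p, lp_zero)) \<or> (j = 2 \<and> v = (p, p)) \<or> (j = 3 \<and> v = (lp_zero, p))))"

end

theory Submission
  imports Defs "HOL-Computational_Algebra.Formal_Laurent_Series"
begin

notation fls_nth (infixl "$$" 75)

declare add_bit_eq_xor [simp del] mult_bit_eq_and [simp del]

definition h :: "lpoly \<Rightarrow> bit fls" where "h p = Abs_fls p"

lemma h_nth: assumes "is_lpoly p" shows "h p $$ n = p n"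
proof -
  have "finite {n::nat. p (- int n) \<noteq> 0}"
  proof -
    have "{n::nat. p (- int n) \<noteq> 0} = (\<lambda>n. - int n) -` {n. p n \<noteq> 0}" by auto
    moreover have "finite ((\<lambda>n::nat. - int n) -` {n. p n \<noteq> 0})"
      by (rule finite_vimageI) (use assms is_lpoly_def in \<open>auto simp: inj_on_def\<close>)
    ultimately show ?thesis by simp
  qed
  then show ?thesis unfolding h_def by (simp add: nth_Abs_fls_finite_nonzero_neg_nth)
qed

lemma h_inj: "is_lpoly p \<Longrightarrow> is_lpoly q \<Longrightarrow> h p = h q \<Longrightarrow> p = q"
  by (metis h_nth ext)

lemma lpoly_zero: "is_lpoly lp_zero" by (simp add: is_lpoly_def lp_zero_def)
lemma lpoly_one: "is_lpoly lp_one" by (simp add: is_lpoly_def lp_one_def)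
lemma lpoly_add: "is_lpoly p \<Longrightarrow> is_lpoly q \<Longrightarrow> is_lpoly (lp_add p q)"
  unfolding is_lpoly_def lp_add_def
  by (rule finite_subset[of _ "{n. p n \<noteq> 0} \<union> {n. q n \<noteq> 0}"]) auto

lemma lpoly_mult: assumes "is_lpoly p" "is_lpoly q" shows "is_lpoly (lp_mult p q)"
proof -
  let ?S = "{n. p n \<noteq> 0}" and ?T = "{n. q n \<noteq> 0}"
  have "{n. lp_mult p q n \<noteq> 0} \<subseteq> (\<lambda>(x,y). x + y) ` (?S \<times> ?T)"
  proof
    fix n assume "n \<in> {n. lp_mult p q n \<noteq> 0}"
    then have "(\<Sum>k\<in>?S. p k * q (n - k)) \<noteq> 0" by (simp add: lp_mult_def)
    then obtain k where k: "k \<in> ?S" "p k * q (n - k) \<noteq> 0" by (meson sum.neutral)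
    then have "q (n - k) \<noteq> 0" by auto
    with k have "(k, n - k) \<in> ?S \<times> ?T" by auto
    then show "n \<in> (\<lambda>(x,y). x + y) ` (?S \<times> ?T)" by (force intro: image_eqI[where x="(k, n-k)"])
  qed
  moreover have "finite ((\<lambda>(x,y). x + y) ` (?S \<times> ?T))" using assms by (simp add: is_lpoly_def)
  ultimately show ?thesis unfolding is_lpoly_def by (rule finite_subset)
qed

lemma h_zero: "h lp_zero = 0"
  by (rule fls_eqI) (simp add: h_nth lpoly_zero, simp add: lp_zero_def)
lemma h_one: "h lp_one = 1"
  by (rule fls_eqI) (simp add: h_nth lpoly_one, simp add: lp_one_def)
lemma h_add: "is_lpoly p \<Longrightarrow> is_lpoly q \<Longrightarrow> h (lp_add p q) = h p + h q"
  by (rule fls_eqI) (simp add: h_nth lpoly_add, simp add: lp_add_def)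

lemma h_mult: assumes P: "is_lpoly p" and Q: "is_lpoly q" shows "h (lp_mult p q) = h p * h q"
proof (rule fls_eqI)
  fix n
  define df where "df = fls_subdegree (h p)"
  define dg where "dg = fls_subdegree (h q)"
  let ?S = "{k. p k \<noteq> 0}"
  let ?T = "?S \<inter> {df..n - dg}"
  have fS: "finite ?S" using P is_lpoly_def by auto
  have lowp: "p k \<noteq> 0 \<Longrightarrow> df \<le> k" for k
    unfolding df_def by (rule fls_subdegree_leI) (simp add: h_nth P)
  have lowq: "q k \<noteq> 0 \<Longrightarrow> dg \<le> k" for k
    unfolding dg_def by (rule fls_subdegree_leI) (simp add: h_nth Q)
  have "(h p * h q) $$ n = (\<Sum>i=df..n - dg. p i * q (n - i))"
    unfolding df_def dg_def fls_times_nth(2) by (simp add: h_nth P Q)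
  also have "\<dots> = (\<Sum>i\<in>?T. p i * q (n - i))"
    by (rule sum.mono_neutral_right) auto
  also have "\<dots> = (\<Sum>i\<in>?S. p i * q (n - i))"
  proof (rule sum.mono_neutral_left[OF fS])
    show "\<forall>i\<in>?S - ?T. p i * q (n - i) = 0"
    proof
      fix i assume i: "i \<in> ?S - ?T"
      then have "df \<le> i" using lowp by auto
      with i have "i > n - dg" by auto
      then have "q (n - i) = 0" using lowq by force
      then show "p i * q (n - i) = 0" by simp
    qed
  qed auto
  finally show "h (lp_mult p q) $$ n = (h p * h q) $$ n"
    by (simp only: h_nth[OF lpoly_mult[OF P Q]]) (simp add: lp_mult_def)
qed


lemma two0: "(2::bit fls) = 0"
proof -
  have "(1::bit fls) + 1 = 0"
    by (rule fls_eqI) (simp only: fls_plus_nth fls_one_nth fls_zero_nth, simp add: add_bit_eq_xor)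
  then show ?thesis by (metis one_add_one)
qed

lemma neg_self: "- (x::bit fls) = x"
proof -
  have "x + x = 0" using two0 by (metis mult_2 mult_zero_left)
  then show ?thesis by (metis add.inverse_unique)
qed

lemma pm: "x + y = x - (y::bit fls)"
  by (metis diff_conv_add_uminus neg_self)

type_synonym fm = "bit fls \<times> bit fls \<times> bit fls \<times> bit fls"
type_synonym fv = "bit fls \<times> bit fls"

fun fmul :: "fm \<Rightarrow> fm \<Rightarrow> fm" where
  "fmul (a11, a12, a21, a22) (b11, b12, b21, b22) =
     (a11*b11 + a12*b21, a11*b12 + a12*b22, a21*b11 + a22*b21, a21*b12 + a22*b22)"

definition fid :: fm where "fid = (1,0,0,1)"

fun fpow :: "fm \<Rightarrow> nat \<Rightarrow> fm" where
  "fpow a 0 = fid"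
| "fpow a (Suc n) = fmul a (fpow a n)"

fun fapp :: "fm \<Rightarrow> fv \<Rightarrow> fv" where
  "fapp (a11, a12, a21, a22) (x, y) = (a11*x + a12*y, a21*x + a22*y)"

fun fdet :: "fm \<Rightarrow> bit fls" where
  "fdet (a11, a12, a21, a22) = a11*a22 + a12*a21"

fun HM :: "lmat \<Rightarrow> fm" where "HM (a,b,c,d) = (h a, h b, h c, h d)"
fun HV :: "lvec \<Rightarrow> fv" where "HV (a,b) = (h a, h b)"
fun good :: "lmat \<Rightarrow> bool" where
  "good (a,b,c,d) \<longleftrightarrow> is_lpoly a \<and> is_lpoly b \<and> is_lpoly c \<and> is_lpoly d"

lemma mult_good: "good A \<Longrightarrow> good B \<Longrightarrow> good (mat_mult A B) \<and> HM (mat_mult A B) = fmul (HM A) (HM B)"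
  by (cases A; cases B) (simp add: lpoly_add lpoly_mult h_add h_mult)

lemma id_good: "good mat_id" "HM mat_id = fid"
  by (simp_all add: mat_id_def fid_def lpoly_one lpoly_zero h_one h_zero)

lemma pow_good: "good a \<Longrightarrow> good (mat_pow a n) \<and> HM (mat_pow a n) = fpow (HM a) n"
  by (induction n) (auto simp: id_good mult_good)

lemma app_good: "good A \<Longrightarrow> is_lpoly (fst v) \<Longrightarrow> is_lpoly (snd v) \<Longrightarrow>
   HV (mat_apply A v) = fapp (HM A) (HV v)"
  by (cases A; cases v) (simp add: lpoly_add lpoly_mult h_add h_mult)

lemma HM_inj: "good A \<Longrightarrow> good B \<Longrightarrow> HM A = HM B \<Longrightarrow> A = B"
  by (cases A; cases B) (auto dest: h_inj)

lemma fmul_assoc: "fmul (fmul A B) C = fmul A (fmul B C)"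
  by (cases A; cases B; cases C) (simp add: algebra_simps)

lemma fmul_id: "fmul fid A = A"
  by (cases A) (simp add: fid_def)

lemma fpow_add: "fpow M (m + n) = fmul (fpow M m) (fpow M n)"
  by (induction m) (simp_all add: fmul_id fmul_assoc)

lemma fapp_mul: "fapp (fmul M N) v = fapp M (fapp N v)"
  by (cases M; cases N; cases v) (simp add: algebra_simps)

lemma fdet_mul: "fdet (fmul M N) = fdet M * fdet N"
proof (cases M; cases N)
  fix a b c d e f g k assume "M = (a,b,c,d)" "N = (e,f,g,k)"
  have "(a * e - b * g) * (c * f - d * k) - (a * f - b * k) * (c * e - d * g) =
        - ((a * d - b * c) * (e * k - f * g))" by algebra
  then show ?thesis using \<open>M = _\<close> \<open>N = _\<close> by (simp only: fdet.simps fmul.simps pm neg_self)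
qed

lemma fdet_pow: "fdet (fpow M n) = fdet M ^ n"
  by (induction n) (simp_all add: fid_def fdet_mul)

lemma CH: assumes "fdet (m11,m12,m21,m22) = 1" "m22 = m11"
  shows "fmul (m11,m12,m21,m22) (m11,m12,m21,m22) = fid"
proof -
  have xx: "\<And>x::bit fls. x + x = 0" by (metis neg_self add.right_inverse)
  have "m11*m12 + m12*m11 = 0" "m21*m11 + m11*m21 = 0" by (metis mult.commute xx)+
  moreover have "m11*m11 + m12*m21 = 1" "m21*m12 + m11*m11 = 1" using assms
    by (simp_all add: ac_simps)
  ultimately show ?thesis using assms(2) by (simp add: fid_def)
qed


lemma pal_zero: "is_palindrome lp_zero" using lpoly_zero by (simp add: is_palindrome_def lp_zero_def)
lemma pal_one: "is_palindrome lp_one" using lpoly_one by (simp add: is_palindrome_def lp_one_def)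
lemma pal_add: "is_palindrome p \<Longrightarrow> is_palindrome q \<Longrightarrow> is_palindrome (lp_add p q)"
  using lpoly_add[of p q] by (simp add: is_palindrome_def lp_add_def)

lemma pal_mult: assumes P: "is_palindrome p" and Q: "is_palindrome q"
  shows "is_palindrome (lp_mult p q)"
proof -
  have Ps: "p (- n) = p n" and Qs: "q (- n) = q n" for n using P Q by (auto simp: is_palindrome_def)
  have "lp_mult p q (- n) = lp_mult p q n" for n
  proof -
    have "(\<Sum>k\<in>{k. p k \<noteq> 0}. p k * q (- n - k)) = (\<Sum>k\<in>{k. p k \<noteq> 0}. p k * q (n - k))"
    proof (rule sum.reindex_bij_witness[where i=uminus and j=uminus])
      fix k
      have "q (n - - k) = q (- n - k)" using Qs[of "- n - k"] by (simp add: algebra_simps)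
      then show "p (- k) * q (n - - k) = p k * q (- n - k)"
        using Ps[of k] by simp
    qed (auto simp: Ps)
    then show ?thesis by (simp add: lp_mult_def)
  qed
  then show ?thesis using P Q by (simp add: is_palindrome_def lpoly_mult)
qed

fun pgood :: "lmat \<Rightarrow> bool" where
  "pgood (a,b,c,d) \<longleftrightarrow> is_palindrome a \<and> is_palindrome b \<and> is_palindrome c \<and> is_palindrome d"

lemma pgood_pow: "pgood a \<Longrightarrow> pgood (mat_pow a n)"
proof (induction n)
  case 0 then show ?case by (simp add: mat_id_def pal_one pal_zero)
next
  case (Suc n)
  then show ?case by (cases a; cases "mat_pow a n") (simp add: pal_add pal_mult)
qed

lemma pgood_good: "pgood A \<Longrightarrow> good A"
  by (cases A) (simp add: is_palindrome_def)

definition fpal :: "bit fls \<Rightarrow> bool" where "fpal f \<longleftrightarrow> (\<forall>n. f $$ (- n) = f $$ n)"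

lemma fpal_h: "is_palindrome p \<Longrightarrow> fpal (h p)"
  by (simp add: fpal_def is_palindrome_def h_nth)

lemma fpal_add: "fpal f \<Longrightarrow> fpal g \<Longrightarrow> fpal (f + g)"
  by (simp add: fpal_def)

lemma fpal_sub: assumes "fpal f" "f \<noteq> 0" shows "fls_subdegree f \<le> 0"
proof -
  let ?d = "fls_subdegree f"
  have "f $$ ?d \<noteq> 0" using assms by simp
  then have "f $$ (- ?d) \<noteq> 0" using assms(1) by (simp add: fpal_def)
  then have "?d \<le> - ?d" by (rule fls_subdegree_leI)
  then show ?thesis by simp
qed

lemma unit_pal: assumes "fpal f" "fpal g" "f * g = 1" shows "f = 1"
proof -
  have f0: "f \<noteq> 0" and g0: "g \<noteq> 0" using assms(3) by auto
  have "fls_subdegree f + fls_subdegree g = 0"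
    using assms(3) fls_subdegree_mult[OF f0 g0] by simp
  with fpal_sub[OF assms(1) f0] fpal_sub[OF assms(2) g0] have d: "fls_subdegree f = 0" by simp
  show ?thesis
  proof (rule fls_eqI)
    fix n
    show "f $$ n = 1 $$ n"
    proof (cases "n = 0")
      case True
      then show ?thesis using nth_fls_subdegree_nonzero[OF f0] d by simp
    next
      case False
      have "f $$ n = 0"
      proof (cases "n < 0")
        case True then show ?thesis using d by (metis fls_subdegree_leI not_le)
      next
        case False2: False
        then have "- n < 0" using False by simp
        then have "f $$ (- n) = 0" using d by (metis fls_subdegree_leI not_le)
        then show ?thesis using assms(1) by (simp add: fpal_def)
      qed
      then show ?thesis using False by simp
    qed
  qed
qed


definition ftype :: "nat \<Rightarrow> fv \<Rightarrow> bool" where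
  "ftype j v \<longleftrightarrow> (\<exists>P. P \<noteq> 0 \<and> ((j = 1 \<and> v = (P, 0)) \<or> (j = 2 \<and> v = (P, P)) \<or> (j = 3 \<and> v = (0, P))))"

lemma core:
  assumes pal: "fpal b11" "fpal b12" "fpal b21" "fpal b22"
    and det: "fdet (b11,b12,b21,b22) = 1"
    and app: "fapp (b11,b12,b21,b22) v = w"
    and tv: "ftype j v" and tw: "ftype j w"
  shows "fmul (b11,b12,b21,b22) (b11,b12,b21,b22) = fid"
proof -
  have xx: "\<And>x::bit fls. x + x = 0" by (metis neg_self add.right_inverse)
  obtain P where P0: "P \<noteq> 0" and Pv: "(j = 1 \<and> v = (P, 0)) \<or> (j = 2 \<and> v = (P, P)) \<or> (j = 3 \<and> v = (0, P))"
    using tv unfolding ftype_def by blast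
  obtain Q where Qw: "(j = 1 \<and> w = (Q, 0)) \<or> (j = 2 \<and> w = (Q, Q)) \<or> (j = 3 \<and> w = (0, Q))"
    using tw unfolding ftype_def by blast
  have dt: "b11 * b22 + b12 * b21 = 1" using det by simp
  have "b22 = b11"
  proof -
    consider "j = 1" "v = (P, 0)" "w = (Q, 0)" | "j = 2" "v = (P, P)" "w = (Q, Q)"
      | "j = 3" "v = (0, P)" "w = (0, Q)" using Pv Qw by auto
    then show ?thesis
    proof cases
      case 1
      then have "b21 * P = 0" using app by simp
      then have "b21 = 0" using P0 by simp
      then have u: "b11 * b22 = 1" using dt by simp
      then have "b11 = 1" using unit_pal pal by blast
      moreover have "b22 = 1" using unit_pal[of b22 b11] pal u by (simp add: mult.commute)
      ultimately show ?thesis by simp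
    next
      case 3
      then have "b12 * P = 0" using app by simp
      then have "b12 = 0" using P0 by simp
      then have u: "b11 * b22 = 1" using dt by simp
      then have "b11 = 1" using unit_pal pal by blast
      moreover have "b22 = 1" using unit_pal[of b22 b11] pal u by (simp add: mult.commute)
      ultimately show ?thesis by simp
    next
      case 2
      then have "b11 * P + b12 * P = b21 * P + b22 * P" using app by simp
      then have "(b11 + b12) * P = (b21 + b22) * P" by (simp add: algebra_simps)
      then have l: "b11 + b12 = b21 + b22" using P0 by simp
      define L where "L = b11 + b12"
      have L2: "L = b21 + b22" using l L_def by simp
      have "L * (L + b11 + b22) = b11 * b22 + b12 * b21"
      proof -
        have "L * (L + b11 + b22) = L * L + (b21 + b22) * b11 + (b11 + b12) * b22"
          using L_def L2 by (simp add: algebra_simps)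
        also have "\<dots> = (b11 + b12) * (b21 + b22) + (b21 + b22) * b11 + (b11 + b12) * b22"
          using L_def L2 by simp
        also have "\<dots> = (b11 * b22 + b12 * b21) + (b11*b21 + b11*b21) + (b11*b22 + b11*b22)
                        + (b12*b22 + b12*b22)"
          by (simp add: algebra_simps)
        also have "\<dots> = b11 * b22 + b12 * b21" by (simp add: xx)
        finally show ?thesis .
      qed
      then have u: "L * (L + b11 + b22) = 1" using dt by simp
      have pL: "fpal L" using L_def pal fpal_add by simp
      have pM: "fpal (L + b11 + b22)" using pL pal fpal_add by simp
      have "L = 1" using unit_pal[OF pL pM u] .
      moreover have "L + b11 + b22 = 1" using unit_pal[OF pM pL] u by (simp add: mult.commute)
      ultimately have "b11 + b22 = 0" by (metis add.assoc add_left_cancel add.right_neutral)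
      then show ?thesis by (metis add_eq_0_iff neg_self)
    qed
  qed
  then show ?thesis using CH det by simp
qed


lemma type_transfer: assumes "is_type j v" shows "ftype j (HV v)"
proof -
  obtain p where p: "is_lpoly p" "p \<noteq> lp_zero"
    "(j = 1 \<and> v = (p, lp_zero)) \<or> (j = 2 \<and> v = (p, p)) \<or> (j = 3 \<and> v = (lp_zero, p))"
    using assms unfolding is_type_def by blast
  have "h p \<noteq> 0" using p h_inj lpoly_zero h_zero by metis
  then show ?thesis using p(3) unfolding ftype_def by (auto simp: h_zero)
qed

theorem lemmaA1:
  fixes a :: lmat and j :: nat and \<xi> :: lvec
  assumes "is_csca a" and "\<not> is_periodic a"
    and "j \<in> {1, 2, 3}"
    and "is_lpoly (fst \<xi>)" and "is_lpoly (snd \<xi>)" and "\<xi> \<noteq> (lp_zero, lp_zero)"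
  shows "\<forall>t1 t2. is_type j (mat_apply (mat_pow a t1) \<xi>) \<and> is_type j (mat_apply (mat_pow a t2) \<xi>)
           \<longrightarrow> t1 = t2"
proof -
  define A where "A = HM a"
  have pa: "pgood a" using assms(1) by (cases a) (simp add: is_csca_def)
  have ga: "good a" using pgood_good[OF pa] .
  have G: "good (mat_pow a n)" "HM (mat_pow a n) = fpow A n" for n
    using pow_good[OF ga] A_def by auto
  have V: "HV (mat_apply (mat_pow a n) \<xi>) = fapp (fpow A n) (HV \<xi>)" for n
    using app_good[OF G(1) assms(4,5)] G(2) by simp
  have detA: "fdet A = 1"
  proof -
    obtain a1 a2 a3 a4 where aa: "a = (a1,a2,a3,a4)" by (cases a)
    have l: "is_lpoly a1" "is_lpoly a2" "is_lpoly a3" "is_lpoly a4" using ga aa by auto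
    have "mat_det a = lp_one" using assms(1) by (simp add: is_csca_def)
    then have "h (mat_det a) = 1" by (simp add: h_one)
    then show ?thesis using l aa A_def by (simp add: h_add h_mult lpoly_mult)
  qed
  have NP: "n > 0 \<Longrightarrow> fpow A n \<noteq> fid" for n
  proof
    assume n: "n > 0" and e: "fpow A n = fid"
    have "mat_pow a n = mat_id" using HM_inj[OF G(1) id_good(1)] G(2) e id_good(2) by simp
    then show False using assms(2) n unfolding is_periodic_def by blast
  qed
  have key: "t1 < t2 \<Longrightarrow> is_type j (mat_apply (mat_pow a t1) \<xi>) \<Longrightarrow>
      is_type j (mat_apply (mat_pow a t2) \<xi>) \<Longrightarrow> False" for t1 t2
  proof -
    assume lt: "t1 < t2" and ty1: "is_type j (mat_apply (mat_pow a t1) \<xi>)"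
      and ty2: "is_type j (mat_apply (mat_pow a t2) \<xi>)"
    define s where "s = t2 - t1"
    have s0: "s > 0" and t2: "t2 = s + t1" using lt s_def by auto
    obtain b11 b12 b21 b22 where B: "fpow A s = (b11,b12,b21,b22)" by (cases "fpow A s")
    obtain c11 c12 c21 c22 where C: "mat_pow a s = (c11,c12,c21,c22)" by (cases "mat_pow a s")
    have pc: "pgood (mat_pow a s)" using pgood_pow[OF pa] .
    have hc: "(h c11, h c12, h c21, h c22) = (b11,b12,b21,b22)" using G(2)[of s] B C by simp
    have pal: "fpal b11" "fpal b12" "fpal b21" "fpal b22"
      using pc C hc fpal_h by auto
    have det: "fdet (b11,b12,b21,b22) = 1" using fdet_pow[of A s] detA B by simp
    have app: "fapp (b11,b12,b21,b22) (HV (mat_apply (mat_pow a t1) \<xi>))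
               = HV (mat_apply (mat_pow a t2) \<xi>)"
      using V[of t1] V[of t2] t2 fpow_add[of A s t1] fapp_mul B by simp
    have "fmul (b11,b12,b21,b22) (b11,b12,b21,b22) = fid"
      by (rule core[OF pal det app type_transfer[OF ty1] type_transfer[OF ty2]])
    then have "fpow A (s + s) = fid" using fpow_add[of A s s] B by simp
    then show False using NP s0 by simp
  qed
  show ?thesis
  proof (intro allI impI)
    fix t1 t2 assume "is_type j (mat_apply (mat_pow a t1) \<xi>) \<and> is_type j (mat_apply (mat_pow a t2) \<xi>)"
    then show "t1 = t2" using key by (metis linorder_neqE_nat)
  qed
qed

end
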